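(* For $n\ge2$, \begin{align*} \left|\Pi_n\wr C_2(1^11^2,1^22^1)\right|&=2B(n)+\sum_{j=2}^n\sum_{k=0}^{n-j}B(n-j-k)+B(n-1)\\ &\quad+\sum_{j=2}^{n-1}B(j-1)\left(B(n-j)+\sum_{k=1}^{n-j}\left(\left(k+\binom{n-j}{k}\right) B(n-j-k)\right)\right), \end{align*} where $B(m)$ is the $m$th Bell number.
   Context: For $n\ge0$ let $[n]=\{1,\dots,n\}$. A $2$-colored set partition of $[n]$ is a set partition of $[n]$ together with an assignment of a color from $\{1,2\}$ to each element; $\Pi_n\wr C_2$ is the set of these. For a set $S$ of patterns, $\Pi_n\wr C_2(S)$ is the set of such colored partitions avoiding every pattern in $S$ in the pattern sense. For the patterns used here: $\sigma$ contains $1^11^2$ iff there are $i<j$ in the same block with $i$ colored $1$ and $j$ colored $2$; $\sigma$ contains $1^22^1$ iff there are $i<j$ in different blocks with $i$ colored $2$ and $j$ colored $1$. $B(m)$ is the number of set partitions of $[m]$, with $B(0)=1$. *)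

theory Defs
  imports Main "HOL-Library.Disjoint_Sets" "HOL-Library.FuncSet"
begin

definition Bell :: "nat \<Rightarrow> nat" where
  "Bell m = card {P. partition_on {1..m} P}"

definition colored_partitions :: "nat \<Rightarrow> (nat set set \<times> (nat \<Rightarrow> nat)) set" where
  "colored_partitions n = {(P, c). partition_on {1..n} P \<and> c \<in> {1..n} \<rightarrow>\<^sub>E {1, 2}}"

definition same_block :: "nat set set \<Rightarrow> nat \<Rightarrow> nat \<Rightarrow> bool" where
  "same_block P i j \<longleftrightarrow> (\<exists>B\<in>P. i \<in> B \<and> j \<in> B)"

definition contains_11_12 :: "nat set set \<times> (nat \<Rightarrow> nat) \<Rightarrow> bool" where
  "contains_11_12 \<sigma> = (case \<sigma> of (P, c) \<Rightarrow>
     \<exists>i j. i < j \<and> same_block P i j \<and> c i = 1 \<and> c j = 2)"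

definition contains_12_21 :: "nat set set \<times> (nat \<Rightarrow> nat) \<Rightarrow> bool" where
  "contains_12_21 \<sigma> = (case \<sigma> of (P, c) \<Rightarrow>
     \<exists>i j. i < j \<and> i \<in> \<Union>P \<and> j \<in> \<Union>P \<and> \<not> same_block P i j \<and> c i = 2 \<and> c j = 1)"

definition avoiders :: "nat \<Rightarrow> (nat set set \<times> (nat \<Rightarrow> nat)) set" where
  "avoiders n = {\<sigma> \<in> colored_partitions n. \<not> contains_11_12 \<sigma> \<and> \<not> contains_12_21 \<sigma>}"

end

theory Submission
  imports Defs
begin

definition PT :: "'a set \<Rightarrow> 'a set set set" where "PT A = {P. partition_on A P}"

lemma PT_bij:
  assumes f: "bij_betw f A B"
  shows "card (PT A) = card (PT B)"
proof -
  have inj: "inj_on f A" using bij_betw_imp_inj_on[OF f] .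
  have fA: "f ` A = B" using bij_betw_imp_surj_on[OF f] .
  define g where "g = inv_into A f"
  have gbij: "bij_betw g B A" unfolding g_def by (rule bij_betw_inv_into[OF f])
  have gf: "\<And>x. x \<in> A \<Longrightarrow> g (f x) = x" using inj g_def by simp
  have fg: "\<And>y. y \<in> B \<Longrightarrow> f (g y) = y" unfolding g_def by (rule f_inv_into_f) (simp add: fA)
  have "bij_betw ((`) ((`) f)) (PT A) (PT B)"
  proof (rule bij_betw_byWitness[where f'="(`) ((`) g)"])
    show "\<forall>a\<in>PT A. (`) ((`) g) ((`) ((`) f) a) = a"
    proof
      fix P assume "P \<in> PT A"
      hence "\<forall>p\<in>P. p \<subseteq> A" by (auto simp: PT_def partition_on_def)
      hence "\<forall>p\<in>P. g ` f ` p = p" using gf by (auto simp: image_image) (force simp: image_iff)+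
      thus "(`) ((`) g) ((`) ((`) f) P) = P" by (simp add: image_image)
    qed
    show "\<forall>a'\<in>PT B. (`) ((`) f) ((`) ((`) g) a') = a'"
    proof
      fix P assume "P \<in> PT B"
      hence "\<forall>p\<in>P. p \<subseteq> B" by (auto simp: PT_def partition_on_def)
      hence "\<forall>p\<in>P. f ` g ` p = p" using fg by (auto simp: image_image) (force simp: image_iff)+
      thus "(`) ((`) f) ((`) ((`) g) P) = P" by (simp add: image_image)
    qed
    show "(`) ((`) f) ` PT A \<subseteq> PT B"
    proof
      fix Q assume "Q \<in> (`) ((`) f) ` PT A"
      then obtain P where P: "partition_on A P" and Q: "Q = (`) f ` P" by (auto simp: PT_def)
      have "partition_on (f ` A) ((`) f ` P - {{}})" by (rule partition_on_inj_image[OF P inj])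
      moreover have "{} \<notin> (`) f ` P" using P by (auto simp: partition_on_def)
      ultimately show "Q \<in> PT B" using Q fA by (simp add: PT_def)
    qed
    show "(`) ((`) g) ` PT B \<subseteq> PT A"
    proof
      fix Q assume "Q \<in> (`) ((`) g) ` PT B"
      then obtain P where P: "partition_on B P" and Q: "Q = (`) g ` P" by (auto simp: PT_def)
      have inj': "inj_on g B" using gbij by (simp add: bij_betw_def)
      have gBA: "g ` B = A" using gbij by (simp add: bij_betw_def)
      have "partition_on (g ` B) ((`) g ` P - {{}})" by (rule partition_on_inj_image[OF P inj'])
      moreover have "{} \<notin> (`) g ` P" using P by (auto simp: partition_on_def)
      ultimately show "Q \<in> PT A" using Q gBA by (simp add: PT_def)
    qed
  qed
  thus ?thesis by (rule bij_betw_same_card)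
qed

lemma card_PT: "finite A \<Longrightarrow> card (PT A) = Bell (card A)"
proof -
  assume "finite A"
  then obtain h where "bij_betw h {1..card A} A" using ex_bij_betw_nat_finite_1 by blast
  hence "card (PT {1..card A}) = card (PT A)" by (rule PT_bij)
  thus ?thesis by (simp add: Bell_def PT_def)
qed

lemma finite_PT: "finite A \<Longrightarrow> finite (PT A)"
  by (simp add: PT_def finitely_many_partition_on)

definition NM :: "'a set \<Rightarrow> 'a set \<Rightarrow> 'a set set set" where
  "NM L R = {P. partition_on (L \<union> R) P \<and> (\<forall>B\<in>P. B \<subseteq> L \<or> B \<subseteq> R)}"

lemma card_NM:
  assumes fin: "finite L" "finite R" and dis: "L \<inter> R = {}"
  shows "card (NM L R) = Bell (card L) * Bell (card R)"
proof -
  have "bij_betw (\<lambda>(Q1,Q2). Q1 \<union> Q2) (PT L \<times> PT R) (NM L R)"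
  proof (rule bij_betw_byWitness[where f'="\<lambda>P. ({B\<in>P. B \<subseteq> L}, {B\<in>P. B \<subseteq> R})"])
    show "\<forall>a\<in>PT L \<times> PT R. (\<lambda>P. ({B \<in> P. B \<subseteq> L}, {B \<in> P. B \<subseteq> R})) ((\<lambda>(Q1, Q2). Q1 \<union> Q2) a) = a"
    proof (rule ballI)
      fix z assume "z \<in> PT L \<times> PT R"
      then obtain Q1 Q2 where z: "z = (Q1, Q2)" "Q1 \<in> PT L" "Q2 \<in> PT R" by blast
      hence a: "\<forall>B\<in>Q1. B \<subseteq> L \<and> B \<noteq> {}" "\<forall>B\<in>Q2. B \<subseteq> R \<and> B \<noteq> {}"
        by (auto simp: PT_def partition_on_def)
      have 1: "{B \<in> Q1 \<union> Q2. B \<subseteq> L} = Q1" using a dis by blast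
      have 2: "{B \<in> Q1 \<union> Q2. B \<subseteq> R} = Q2" using a dis by blast
      show "(\<lambda>P. ({B \<in> P. B \<subseteq> L}, {B \<in> P. B \<subseteq> R})) ((\<lambda>(Q1, Q2). Q1 \<union> Q2) z) = z"
        using 1 2 z by simp
    qed
    show "\<forall>a'\<in>NM L R. (\<lambda>(Q1, Q2). Q1 \<union> Q2) ((\<lambda>P. ({B \<in> P. B \<subseteq> L}, {B \<in> P. B \<subseteq> R})) a') = a'"
      by (auto simp: NM_def)
    show "(\<lambda>(Q1, Q2). Q1 \<union> Q2) ` (PT L \<times> PT R) \<subseteq> NM L R"
    proof (rule image_subsetI)
      fix z assume "z \<in> PT L \<times> PT R"
      then obtain Q1 Q2 where z: "z = (Q1, Q2)" "Q1 \<in> PT L" "Q2 \<in> PT R" by blast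
      hence p1: "partition_on L Q1" and p2: "partition_on R Q2" by (auto simp: PT_def)
      have "partition_on (L \<union> R) (Q1 \<union> Q2)"
      proof (rule partition_onI)
        show "\<Union> (Q1 \<union> Q2) = L \<union> R" using p1 p2 by (auto simp: partition_on_def)
        show "{} \<notin> Q1 \<union> Q2" using p1 p2 by (auto simp: partition_on_def)
        fix p q assume "p \<in> Q1 \<union> Q2" "q \<in> Q1 \<union> Q2" "p \<noteq> q"
        thus "disjnt p q" using p1 p2 dis
          by (auto simp: partition_on_def disjnt_def pairwise_def) blast+
      qed
      moreover have "\<forall>B\<in>Q1 \<union> Q2. B \<subseteq> L \<or> B \<subseteq> R" using p1 p2 by (auto simp: partition_on_def)
      ultimately show "(case z of (Q1, Q2) \<Rightarrow> Q1 \<union> Q2) \<in> NM L R" using z by (simp add: NM_def)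
    qed
    show "(\<lambda>P. ({B \<in> P. B \<subseteq> L}, {B \<in> P. B \<subseteq> R})) ` NM L R \<subseteq> PT L \<times> PT R"
    proof (rule image_subsetI)
      fix P assume P: "P \<in> NM L R"
      hence p: "partition_on (L \<union> R) P" and nm: "\<forall>B\<in>P. B \<subseteq> L \<or> B \<subseteq> R" by (auto simp: NM_def)
      have ne: "{} \<notin> P" using p by (auto simp: partition_on_def)
      have dj: "disjoint P" using p by (auto simp: partition_on_def)
      have "partition_on L {B \<in> P. B \<subseteq> L}"
      proof (rule partition_onI)
        show "\<Union> {B \<in> P. B \<subseteq> L} = L"
        proof
          show "L \<subseteq> \<Union> {B \<in> P. B \<subseteq> L}"
          proof
            fix x assume "x \<in> L"
            then obtain B where "B \<in> P" "x \<in> B" using p by (auto simp: partition_on_def)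
            moreover have "\<not> B \<subseteq> R" using \<open>x \<in> B\<close> \<open>x \<in> L\<close> dis by blast
            ultimately show "x \<in> \<Union> {B \<in> P. B \<subseteq> L}" using nm by blast
          qed
        qed blast
      qed (use ne dj in \<open>auto simp: pairwise_def disjnt_def\<close>)
      moreover have "partition_on R {B \<in> P. B \<subseteq> R}"
      proof (rule partition_onI)
        show "\<Union> {B \<in> P. B \<subseteq> R} = R"
        proof
          show "R \<subseteq> \<Union> {B \<in> P. B \<subseteq> R}"
          proof
            fix x assume "x \<in> R"
            then obtain B where "B \<in> P" "x \<in> B" using p by (auto simp: partition_on_def)
            moreover have "\<not> B \<subseteq> L" using \<open>x \<in> B\<close> \<open>x \<in> R\<close> dis by blast
            ultimately show "x \<in> \<Union> {B \<in> P. B \<subseteq> R}" using nm by blast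
          qed
        qed blast
      qed (use ne dj in \<open>auto simp: pairwise_def disjnt_def\<close>)
      ultimately show "({B \<in> P. B \<subseteq> L}, {B \<in> P. B \<subseteq> R}) \<in> PT L \<times> PT R" by (simp add: PT_def)
    qed
  qed
  hence "card (NM L R) = card (PT L \<times> PT R)" by (simp add: bij_betw_same_card)
  thus ?thesis using fin by (simp add: card_cartesian_product card_PT)
qed

lemma card_add_block:
  assumes X: "X \<noteq> {}" "A \<inter> X = {}"
  shows "card {P. partition_on (A \<union> X) P \<and> X \<in> P \<and> \<Phi> (P - {X})} = card {Q. partition_on A Q \<and> \<Phi> Q}"
proof -
  have "bij_betw (\<lambda>P. P - {X}) {P. partition_on (A \<union> X) P \<and> X \<in> P \<and> \<Phi> (P - {X})} {Q. partition_on A Q \<and> \<Phi> Q}"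
  proof (rule bij_betw_byWitness[where f'="insert X"])
    show "\<forall>a\<in>{P. partition_on (A \<union> X) P \<and> X \<in> P \<and> \<Phi> (P - {X})}. insert X (a - {X}) = a" by auto
    show "\<forall>a'\<in>{Q. partition_on A Q \<and> \<Phi> Q}. insert X a' - {X} = a'"
    proof clarify
      fix Q assume "partition_on A Q"
      hence "X \<notin> Q" using X by (auto simp: partition_on_def)
      thus "insert X Q - {X} = Q" by simp
    qed
    show "(\<lambda>P. P - {X}) ` {P. partition_on (A \<union> X) P \<and> X \<in> P \<and> \<Phi> (P - {X})} \<subseteq> {Q. partition_on A Q \<and> \<Phi> Q}"
    proof (rule image_subsetI)
      fix P assume "P \<in> {P. partition_on (A \<union> X) P \<and> X \<in> P \<and> \<Phi> (P - {X})}"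
      hence p: "partition_on (A \<union> X) P" "X \<in> P" "\<Phi> (P - {X})" by auto
      have eq: "insert X (P - {X}) = P" using p by auto
      have d: "disjnt X (\<Union>(P - {X}))" using p(1,2) by (auto simp: partition_on_def pairwise_def disjnt_def)
      have "partition_on (A \<union> X - X) (P - {X})" using partition_on_insert[OF d, of "A \<union> X"] eq p(1) by simp
      moreover have "A \<union> X - X = A" using X by blast
      ultimately show "P - {X} \<in> {Q. partition_on A Q \<and> \<Phi> Q}" using p by simp
    qed
    show "insert X ` {Q. partition_on A Q \<and> \<Phi> Q} \<subseteq> {P. partition_on (A \<union> X) P \<and> X \<in> P \<and> \<Phi> (P - {X})}"
    proof (rule image_subsetI)
      fix Q assume "Q \<in> {Q. partition_on A Q \<and> \<Phi> Q}"
      hence q: "partition_on A Q" "\<Phi> Q" by auto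
      hence xq: "X \<notin> Q" using X by (auto simp: partition_on_def)
      have d: "disjnt X (\<Union>Q)" using q X by (auto simp: partition_on_def disjnt_def)
      have "partition_on (A \<union> X) (insert X Q)" using partition_on_insert[OF d, of "A \<union> X"] q X
        by (simp add: Un_Diff Diff_triv Int_commute)
      thus "insert X Q \<in> {P. partition_on (A \<union> X) P \<and> X \<in> P \<and> \<Phi> (P - {X})}" using xq q by simp
    qed
  qed
  thus ?thesis by (rule bij_betw_same_card)
qed

lemma block_unique:
  assumes "partition_on U P" "x \<in> U"
  shows "\<exists>!B. B \<in> P \<and> x \<in> B"
  using assms by (auto simp: partition_on_def disjoint_def)

lemma the_block:
  assumes "partition_on U P" "B \<in> P" "x \<in> B"
  shows "(THE B. B \<in> P \<and> x \<in> B) = B"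
proof -
  have "x \<in> U" using assms by (auto simp: partition_on_def)
  thus ?thesis using block_unique[OF assms(1)] assms(2,3) by (metis (mono_tags, lifting) the_equality)
qed

lemma card_PT_insert:
  assumes fin: "finite A" and x: "x \<notin> A"
  shows "card (PT (insert x A)) = (\<Sum>S\<in>Pow A. Bell (card A - card S))"
proof -
  have "bij_betw (\<lambda>(S,Q). insert (insert x S) Q) (SIGMA S:Pow A. PT (A - S)) (PT (insert x A))"
  proof (rule bij_betw_byWitness[where f'="\<lambda>P. ((THE B. B \<in> P \<and> x \<in> B) - {x}, P - {THE B. B \<in> P \<and> x \<in> B})"])
    show "\<forall>a\<in>(SIGMA S:Pow A. PT (A - S)). (\<lambda>P. ((THE B. B \<in> P \<and> x \<in> B) - {x}, P - {THE B. B \<in> P \<and> x \<in> B})) ((\<lambda>(S,Q). insert (insert x S) Q) a) = a"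
    proof (rule ballI)
      fix z assume "z \<in> (SIGMA S:Pow A. PT (A - S))"
      then obtain S Q where z: "z = (S, Q)" "S \<subseteq> A" "partition_on (A - S) Q" by (auto simp: PT_def)
      have d: "disjnt (insert x S) (\<Union>Q)" using z x by (auto simp: partition_on_def disjnt_def)
      have xS: "insert x A - insert x S = A - S" using x by auto
      have p: "partition_on (insert x A) (insert (insert x S) Q)"
        using partition_on_insert[OF d, of "insert x A"] z xS by auto
      have t: "(THE B. B \<in> insert (insert x S) Q \<and> x \<in> B) = insert x S"
        by (rule the_block[OF p]) auto
      have nq: "insert x S \<notin> Q" using z x by (auto simp: partition_on_def)
      show "(\<lambda>P. ((THE B. B \<in> P \<and> x \<in> B) - {x}, P - {THE B. B \<in> P \<and> x \<in> B})) ((\<lambda>(S,Q). insert (insert x S) Q) z) = z"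
        using z t nq x by auto
    qed
    show "\<forall>a'\<in>PT (insert x A). (\<lambda>(S,Q). insert (insert x S) Q) ((\<lambda>P. ((THE B. B \<in> P \<and> x \<in> B) - {x}, P - {THE B. B \<in> P \<and> x \<in> B})) a') = a'"
    proof (rule ballI)
      fix P assume "P \<in> PT (insert x A)"
      hence p: "partition_on (insert x A) P" by (simp add: PT_def)
      obtain B where B: "B \<in> P" "x \<in> B" using block_unique[OF p] by blast
      have t: "(THE B. B \<in> P \<and> x \<in> B) = B" by (rule the_block[OF p B])
      show "(\<lambda>(S,Q). insert (insert x S) Q) ((\<lambda>P. ((THE B. B \<in> P \<and> x \<in> B) - {x}, P - {THE B. B \<in> P \<and> x \<in> B})) P) = P"
      proof -
        have "insert x (B - {x}) = B" using B by auto
        thus ?thesis using t B by (simp add: insert_absorb)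
      qed
    qed
    show "(\<lambda>(S,Q). insert (insert x S) Q) ` (SIGMA S:Pow A. PT (A - S)) \<subseteq> PT (insert x A)"
    proof (rule image_subsetI)
      fix z assume "z \<in> (SIGMA S:Pow A. PT (A - S))"
      then obtain S Q where z: "z = (S, Q)" "S \<subseteq> A" "partition_on (A - S) Q" by (auto simp: PT_def)
      have d: "disjnt (insert x S) (\<Union>Q)" using z x by (auto simp: partition_on_def disjnt_def)
      have xS: "insert x A - insert x S = A - S" using x by auto
      have p: "partition_on (insert x A) (insert (insert x S) Q)"
        using partition_on_insert[OF d, of "insert x A"] z xS by auto
      thus "(\<lambda>(S,Q). insert (insert x S) Q) z \<in> PT (insert x A)" using z by (simp add: PT_def)
    qed
    show "(\<lambda>P. ((THE B. B \<in> P \<and> x \<in> B) - {x}, P - {THE B. B \<in> P \<and> x \<in> B})) ` PT (insert x A) \<subseteq> (SIGMA S:Pow A. PT (A - S))"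
    proof (rule image_subsetI)
      fix P assume "P \<in> PT (insert x A)"
      hence p: "partition_on (insert x A) P" by (simp add: PT_def)
      obtain B where B: "B \<in> P" "x \<in> B" using block_unique[OF p] by blast
      have t: "(THE B. B \<in> P \<and> x \<in> B) = B" by (rule the_block[OF p B])
      have sub: "B \<subseteq> insert x A" using p B by (auto simp: partition_on_def)
      have d: "disjnt B (\<Union>(P - {B}))" using p B by (auto simp: partition_on_def pairwise_def disjnt_def)
      have eq: "insert B (P - {B}) = P" using B by auto
      have "partition_on (insert x A - B) (P - {B})" using partition_on_insert[OF d, of "insert x A"] eq p by simp
      moreover have "insert x A - B = A - (B - {x})" using B x by auto
      ultimately show "((THE B. B \<in> P \<and> x \<in> B) - {x}, P - {THE B. B \<in> P \<and> x \<in> B}) \<in> (SIGMA S:Pow A. PT (A - S))"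
        using t sub by (auto simp: PT_def)
    qed
  qed
  hence "card (PT (insert x A)) = card (SIGMA S:Pow A. PT (A - S))" by (simp add: bij_betw_same_card)
  also have "\<dots> = (\<Sum>S\<in>Pow A. card (PT (A - S)))" using fin by (simp add: finite_PT)
  also have "\<dots> = (\<Sum>S\<in>Pow A. Bell (card A - card S))"
    using fin by (intro sum.cong) (auto simp: card_PT card_Diff_subset finite_subset)
  finally show ?thesis .
qed

lemma Bell_Suc: "Bell (Suc m) = (\<Sum>k=0..m. (m choose k) * Bell (m - k))"
proof -
  have "Bell (Suc m) = card (PT (insert (Suc m) {1..m}))"
    by (simp add: Bell_def PT_def atLeastAtMostSuc_conv)
  also have "\<dots> = (\<Sum>S\<in>Pow {1..m}. Bell (m - card S))" by (subst card_PT_insert) auto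
  also have "\<dots> = (\<Sum>k=0..m. \<Sum>S\<in>{S. S \<in> Pow {1..m} \<and> card S = k}. Bell (m - card S))"
    by (rule sum.group[symmetric]) (auto simp: card_mono[of "{1..m}", simplified])
  also have "\<dots> = (\<Sum>k=0..m. (m choose k) * Bell (m - k))"
  proof (rule sum.cong[OF refl])
    fix k
    have "(\<Sum>S\<in>{S. S \<in> Pow {1..m} \<and> card S = k}. Bell (m - card S)) = (\<Sum>S\<in>{S. S \<subseteq> {1..m} \<and> card S = k}. Bell (m - k))"
      by (rule sum.cong) auto
    also have "\<dots> = (m choose k) * Bell (m - k)" using n_subsets[of "{1..m}" k] by simp
    finally show "(\<Sum>S\<in>{S. S \<in> Pow {1..m} \<and> card S = k}. Bell (m - card S)) = (m choose k) * Bell (m - k)" .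
  qed
  finally show ?thesis .
qed

lemma rec_use:
  assumes rec: "\<And>m. B (Suc m) = (\<Sum>k=0..m. (m choose k) * B (m - k))"
  shows "B m + (\<Sum>k=1..m. (k + (m choose k)) * B (m - k)) = B (Suc m) + (\<Sum>k=1..m. k * B (m - k))"
proof -
  have "(\<Sum>k=1..m. (k + (m choose k)) * B (m - k)) = (\<Sum>k=1..m. k * B (m - k)) + (\<Sum>k=1..m. (m choose k) * B (m - k))"
    by (simp add: distrib_right sum.distrib)
  moreover have "B (Suc m) = B m + (\<Sum>k=1..m. (m choose k) * B (m - k))"
    unfolding rec by (simp add: sum.atLeast_Suc_atMost)
  ultimately show ?thesis by simp
qed

lemma tri_swap:
  "(\<Sum>k=1..n-1. k * f (n - 1 - k)) = (\<Sum>j=2..n. \<Sum>k=0..n-j. (f (n - j - k) :: nat))"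
proof -
  have "(\<Sum>k=1..n-1. k * f (n - 1 - k)) = (\<Sum>k=1..n-1. \<Sum>x=1..k. f (n - 1 - k))" by simp
  also have "\<dots> = (\<Sum>(k,x)\<in>(SIGMA k:{1..n-1}. {1..k}). f (n - 1 - k))"
    by (rule sum.Sigma) auto
  also have "\<dots> = (\<Sum>(j,k)\<in>(SIGMA j:{2..n}. {0..n-j}). f (n - j - k))"
    by (rule sum.reindex_bij_witness[where i="\<lambda>(j,k). (k + j - 1, j - 1)" and j="\<lambda>(k,x). (x + 1, k - x)"])
       (auto simp: algebra_simps)
  also have "\<dots> = (\<Sum>j=2..n. \<Sum>k=0..n-j. f (n - j - k))" by (rule sum.Sigma[symmetric]) auto
  finally show ?thesis .
qed

lemma arith_main:
  fixes B :: "nat \<Rightarrow> nat"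
  assumes n: "n \<ge> 2" and rec: "\<And>m. B (Suc m) = (\<Sum>k=0..m. (m choose k) * B (m - k))"
    and B0: "B 0 = 1" and B1: "B 1 = 1"
  shows "(\<Sum>p=0..n. B p * B (n - p)) + (\<Sum>a=1..n. \<Sum>k=1..n-a. k * (B (a-1) * B (n-(a+k)))) =
    2 * B n + (\<Sum>j=2..n. \<Sum>k=0..n-j. B (n - j - k)) + B (n - 1)
    + (\<Sum>j=2..n-1. B (j - 1) * (B (n - j) + (\<Sum>k=1..n-j. (k + (n - j choose k)) * B (n - j - k))))"
proof -
  obtain m where m: "n = Suc (Suc m)" using n by (metis add_2_eq_Suc le_Suc_ex)
  have s1: "(\<Sum>j=2..n-1. B (j - 1) * (B (n - j) + (\<Sum>k=1..n-j. (k + (n - j choose k)) * B (n - j - k))))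
     = (\<Sum>j=2..n-1. B (j - 1) * B (Suc (n - j))) + (\<Sum>j=2..n-1. B (j - 1) * (\<Sum>k=1..n-j. k * B (n - j - k)))"
  proof -
    have "(\<Sum>j=2..n-1. B (j - 1) * (B (n - j) + (\<Sum>k=1..n-j. (k + (n - j choose k)) * B (n - j - k))))
       = (\<Sum>j=2..n-1. B (j - 1) * (B (Suc (n - j)) + (\<Sum>k=1..n-j. k * B (n - j - k))))"
    proof (rule sum.cong[OF refl])
      fix j
      show "B (j - 1) * (B (n - j) + (\<Sum>k=1..n-j. (k + (n - j choose k)) * B (n - j - k)))
         = B (j - 1) * (B (Suc (n - j)) + (\<Sum>k=1..n-j. k * B (n - j - k)))"
        by (rule arg_cong[where f="\<lambda>t. B (j - 1) * t"], rule rec_use[OF rec])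
    qed
    also have "\<dots> = (\<Sum>j=2..n-1. B (j - 1) * B (Suc (n - j))) + (\<Sum>j=2..n-1. B (j - 1) * (\<Sum>k=1..n-j. k * B (n - j - k)))"
      by (simp add: distrib_left sum.distrib)
    finally show ?thesis .
  qed
  have s2: "(\<Sum>p=0..n. B p * B (n - p)) = 2 * B n + B (n - 1) + (\<Sum>j=2..n-1. B (j - 1) * B (Suc (n - j)))"
  proof -
    have "(\<Sum>p=0..n. B p * B (n - p)) = B 0 * B n + (\<Sum>p=Suc 0..Suc (Suc m). B p * B (n - p))"
      unfolding m by (simp add: sum.atLeast_Suc_atMost)
    also have "(\<Sum>p=Suc 0..Suc (Suc m). B p * B (n - p)) = (\<Sum>p=Suc 0..m. B p * B (n - p)) + B (Suc m) * B (n - Suc m) + B (Suc (Suc m)) * B (n - Suc (Suc m))"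
      by simp
    also have "(\<Sum>p=Suc 0..m. B p * B (n - p)) = (\<Sum>j=Suc (Suc 0)..Suc m. B (j - 1) * B (n - (j - 1)))"
      by (subst sum.shift_bounds_cl_Suc_ivl) simp
    also have "\<dots> = (\<Sum>j=2..n-1. B (j - 1) * B (Suc (n - j)))"
      unfolding m by (rule sum.cong) (auto simp: Suc_diff_le)
    finally show ?thesis using B0 B1 m by simp
  qed
  have s3: "(\<Sum>a=1..n. \<Sum>k=1..n-a. k * (B (a-1) * B (n-(a+k))))
      = (\<Sum>k=1..n-1. k * B (n - 1 - k)) + (\<Sum>j=2..n-1. B (j - 1) * (\<Sum>k=1..n-j. k * B (n - j - k)))"
  proof -
    have "(\<Sum>a=1..n. \<Sum>k=1..n-a. k * (B (a-1) * B (n-(a+k))))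
       = (\<Sum>k=1..n-1. k * (B 0 * B (n-(1+k)))) + (\<Sum>a=Suc (Suc 0)..Suc (Suc m). \<Sum>k=1..n-a. k * (B (a-1) * B (n-(a+k))))"
      unfolding m by (simp add: sum.atLeast_Suc_atMost)
    also have "(\<Sum>a=Suc (Suc 0)..Suc (Suc m). \<Sum>k=1..n-a. k * (B (a-1) * B (n-(a+k))))
       = (\<Sum>a=2..n-1. \<Sum>k=1..n-a. k * (B (a-1) * B (n-(a+k))))"
      unfolding m by (simp add: numeral_2_eq_2)
    also have "\<dots> = (\<Sum>j=2..n-1. B (j - 1) * (\<Sum>k=1..n-j. k * B (n - j - k)))"
      by (rule sum.cong[OF refl]) (simp add: sum_distrib_left algebra_simps)
    also have "(\<Sum>k=1..n-1. k * (B 0 * B (n-(1+k)))) = (\<Sum>k=1..n-1. k * B (n - 1 - k))"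
      using B0 by simp
    finally show ?thesis .
  qed
  show ?thesis using s1 s2 s3 tri_swap[where f=B and n=n] by simp
qed

lemma sb_mem: "partition_on U P \<Longrightarrow> same_block P i j \<Longrightarrow> i \<in> U \<and> j \<in> U"
  by (auto simp: same_block_def partition_on_def)

lemma sb_sym: "same_block P i j \<Longrightarrow> same_block P j i"
  by (auto simp: same_block_def)

lemma sb_trans: "partition_on U P \<Longrightarrow> same_block P i j \<Longrightarrow> same_block P j k \<Longrightarrow> same_block P i k"
  unfolding same_block_def partition_on_def disjoint_def by blast

definition Fc :: "nat \<Rightarrow> (nat \<Rightarrow> nat) \<Rightarrow> nat set set set" where
  "Fc n c = {P. partition_on {1..n} P \<and> \<not> contains_11_12 (P, c) \<and> \<not> contains_12_21 (P, c)}"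

lemma good_iff:
  assumes p: "partition_on {1..n} P"
  shows "(\<not> contains_11_12 (P, c) \<and> \<not> contains_12_21 (P, c)) \<longleftrightarrow>
    (\<forall>i\<in>{1..n}. \<forall>j\<in>{1..n}. i < j \<longrightarrow> (c i = 1 \<and> c j = 2 \<longrightarrow> \<not> same_block P i j) \<and> (c i = 2 \<and> c j = 1 \<longrightarrow> same_block P i j))"
proof -
  have U: "\<Union>P = {1..n}" using p by (simp add: partition_on_def)
  have m: "\<And>i j. same_block P i j \<Longrightarrow> i \<in> {1..n} \<and> j \<in> {1..n}" using sb_mem[OF p] by blast
  show ?thesis unfolding contains_11_12_def contains_12_21_def U prod.case
    using m by blast
qed

lemma Fc_finite: "finite (Fc n c)"
  by (rule finite_subset[OF _ finitely_many_partition_on[of "{1..n}"]]) (auto simp: Fc_def)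

lemma card_avoiders: "card (avoiders n) = (\<Sum>c\<in>{1..n} \<rightarrow>\<^sub>E {1,2}. card (Fc n c))"
proof -
  have "avoiders n = (\<lambda>(c,P). (P,c)) ` (SIGMA c:{1..n} \<rightarrow>\<^sub>E {1,2}. Fc n c)"
  proof (rule set_eqI)
    fix z :: "nat set set \<times> (nat \<Rightarrow> nat)"
    obtain P c where z: "z = (P, c)" by fastforce
    have "z \<in> avoiders n \<longleftrightarrow> c \<in> {1..n} \<rightarrow>\<^sub>E {1,2} \<and> P \<in> Fc n c"
      unfolding z avoiders_def colored_partitions_def Fc_def by blast
    also have "\<dots> \<longleftrightarrow> z \<in> (\<lambda>(c,P). (P,c)) ` (SIGMA c:{1..n} \<rightarrow>\<^sub>E {1,2}. Fc n c)"
      unfolding z by force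
    finally show "z \<in> avoiders n \<longleftrightarrow> z \<in> (\<lambda>(c,P). (P,c)) ` (SIGMA c:{1..n} \<rightarrow>\<^sub>E {1,2}. Fc n c)" .
  qed
  moreover have "inj_on (\<lambda>(c,P). (P,c)) (SIGMA c:{1..n} \<rightarrow>\<^sub>E {1,2}. Fc n c)"
    by (auto simp: inj_on_def)
  ultimately have "card (avoiders n) = card (SIGMA c:{1..n} \<rightarrow>\<^sub>E {1,2}. Fc n c)"
    by (simp add: card_image)
  also have "\<dots> = (\<Sum>c\<in>{1..n} \<rightarrow>\<^sub>E {1,2}. card (Fc n c))"
    by (rule card_SigmaI) (auto simp: finite_PiE Fc_finite)
  finally show ?thesis .
qed

definition mono_c :: "nat \<Rightarrow> nat \<Rightarrow> nat \<Rightarrow> nat" where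
  "mono_c n p i = (if i \<in> {1..n} then (if i \<le> p then 1 else 2) else undefined)"

definition nmc :: "nat \<Rightarrow> nat \<times> nat \<times> nat \<Rightarrow> nat \<Rightarrow> nat" where
  "nmc n t i = (case t of (a, k, x) \<Rightarrow>
     (if i \<in> {1..n} then (if i < a then 1 else if i < a + x then 2 else if i \<le> a + k then 1 else 2) else undefined))"

definition Iset :: "nat \<Rightarrow> (nat \<times> nat \<times> nat) set" where
  "Iset n = (SIGMA a:{1..n}. SIGMA k:{1..n-a}. {1..k})"

lemma mono_1: "i \<in> {1..n} \<Longrightarrow> mono_c n p i = 1 \<longleftrightarrow> i \<le> p"
  by (simp add: mono_c_def)
lemma mono_2: "i \<in> {1..n} \<Longrightarrow> mono_c n p i = 2 \<longleftrightarrow> \<not> i \<le> p"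
  by (simp add: mono_c_def)

lemma Fc_mono:
  assumes "p \<le> n"
  shows "Fc n (mono_c n p) = NM {1..p} {p+1..n}"
proof -
  have U: "{1..p} \<union> {p+1..n} = {1..n}" using assms by auto
  show ?thesis
  proof (rule set_eqI, rule iffI)
    fix P assume "P \<in> Fc n (mono_c n p)"
    hence p: "partition_on {1..n} P" and av: "\<not> contains_11_12 (P, mono_c n p) \<and> \<not> contains_12_21 (P, mono_c n p)"
      by (simp_all add: Fc_def)
    have g: "\<forall>i\<in>{1..n}. \<forall>j\<in>{1..n}. i < j \<longrightarrow> (mono_c n p i = 1 \<and> mono_c n p j = 2 \<longrightarrow> \<not> same_block P i j) \<and> (mono_c n p i = 2 \<and> mono_c n p j = 1 \<longrightarrow> same_block P i j)"
      using av good_iff[OF p] by simp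
    have "\<forall>B\<in>P. B \<subseteq> {1..p} \<or> B \<subseteq> {p+1..n}"
    proof (rule ccontr)
      assume "\<not> ?thesis"
      then obtain B i j where B: "B \<in> P" "i \<in> B" "j \<in> B" "i \<notin> {1..p}" "j \<notin> {p+1..n}" by blast
      have "B \<subseteq> {1..n}" using p B by (auto simp: partition_on_def)
      hence ij: "i \<in> {1..n}" "j \<in> {1..n}" "p < i" "j \<le> p" using B by auto
      have "same_block P j i" using B by (auto simp: same_block_def)
      have "mono_c n p j = 1" "mono_c n p i = 2" using mono_1[OF ij(2)] mono_2[OF ij(1)] ij(3,4) by simp_all
      moreover have "j < i" using ij by linarith
      ultimately show False using g ij(1,2) \<open>same_block P j i\<close> by blast
    qed
    moreover have "partition_on ({1..p} \<union> {p+1..n}) P" using U[symmetric] p by (rule subst[where P="\<lambda>A. partition_on A P"])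
    ultimately show "P \<in> NM {1..p} {p+1..n}" unfolding NM_def by blast
  next
    fix P assume "P \<in> NM {1..p} {p+1..n}"
    hence p0: "partition_on ({1..p} \<union> {p+1..n}) P" and nm: "\<forall>B\<in>P. B \<subseteq> {1..p} \<or> B \<subseteq> {p+1..n}"
      unfolding NM_def by simp_all
    have p: "partition_on {1..n} P" using U p0 by (rule subst[where P="\<lambda>A. partition_on A P"])
    have "\<forall>i\<in>{1..n}. \<forall>j\<in>{1..n}. i < j \<longrightarrow> (mono_c n p i = 1 \<and> mono_c n p j = 2 \<longrightarrow> \<not> same_block P i j) \<and> (mono_c n p i = 2 \<and> mono_c n p j = 1 \<longrightarrow> same_block P i j)"
    proof (intro ballI impI)
      fix i j assume ij: "i \<in> {1..n}" "j \<in> {1..n}" "i < j"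
      show "(mono_c n p i = 1 \<and> mono_c n p j = 2 \<longrightarrow> \<not> same_block P i j) \<and> (mono_c n p i = 2 \<and> mono_c n p j = 1 \<longrightarrow> same_block P i j)"
      proof (intro conjI)
      show "mono_c n p i = 1 \<and> mono_c n p j = 2 \<longrightarrow> \<not> same_block P i j"
      proof (intro impI notI)
        assume c: "mono_c n p i = 1 \<and> mono_c n p j = 2" and sb: "same_block P i j"
        have ip0: "i \<le> p" "\<not> j \<le> p" using mono_1[OF ij(1)] mono_2[OF ij(2)] c by blast+
        hence ip: "i \<le> p" "p < j" by linarith+
        obtain B where B: "B \<in> P" "i \<in> B" "j \<in> B" using sb by (auto simp: same_block_def)
        have "B \<subseteq> {1..p} \<or> B \<subseteq> {p+1..n}" using nm B(1) by blast
        thus False using B ip by auto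
      qed
      show "mono_c n p i = 2 \<and> mono_c n p j = 1 \<longrightarrow> same_block P i j"
      proof
        assume c: "mono_c n p i = 2 \<and> mono_c n p j = 1"
        hence "\<not> i \<le> p" "j \<le> p" using mono_1[OF ij(2)] mono_2[OF ij(1)] by blast+
        hence False using ij(3) by linarith
        thus "same_block P i j" by (rule FalseE)
      qed
      qed
    qed
    thus "P \<in> Fc n (mono_c n p)" using p good_iff[OF p] by (simp add: Fc_def)
  qed
qed

lemma card_Fc_mono: assumes "p \<le> n" shows "card (Fc n (mono_c n p)) = Bell p * Bell (n - p)"
proof -
  have "card (Fc n (mono_c n p)) = card (NM {1..p} {p+1..n})" using Fc_mono[OF assms] by simp
  also have "\<dots> = Bell (card {1..p}) * Bell (card {p+1..n})" by (rule card_NM) auto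
  also have "\<dots> = Bell p * Bell (n - p)" by simp
  finally show ?thesis .
qed

lemma nmc_1: "i \<in> {1..n} \<Longrightarrow> nmc n (a,k,x) i = 1 \<longleftrightarrow> (i < a \<or> (a + x \<le> i \<and> i \<le> a + k))"
  by (simp add: nmc_def)
lemma nmc_2: "i \<in> {1..n} \<Longrightarrow> nmc n (a,k,x) i = 2 \<longleftrightarrow> (a \<le> i \<and> (i < a + x \<or> a + k < i))"
  by (simp add: nmc_def)

lemma Fc_D1: "P \<in> Fc n c \<Longrightarrow> i \<in> {1..n} \<Longrightarrow> j \<in> {1..n} \<Longrightarrow> i < j \<Longrightarrow> c i = 1 \<Longrightarrow> c j = 2 \<Longrightarrow> \<not> same_block P i j"
  unfolding Fc_def contains_11_12_def by auto
lemma Fc_D2: "P \<in> Fc n c \<Longrightarrow> i \<in> {1..n} \<Longrightarrow> j \<in> {1..n} \<Longrightarrow> i < j \<Longrightarrow> c i = 2 \<Longrightarrow> c j = 1 \<Longrightarrow> same_block P i j"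
proof -
  assume P: "P \<in> Fc n c" and ij: "i \<in> {1..n}" "j \<in> {1..n}" "i < j" "c i = 2" "c j = 1"
  hence p: "partition_on {1..n} P" and nc: "\<not> contains_12_21 (P, c)" by (auto simp: Fc_def)
  have "\<Union>P = {1..n}" using p by (simp add: partition_on_def)
  hence m: "i \<in> \<Union>P" "j \<in> \<Union>P" using ij by auto
  show "same_block P i j" using nc ij(3,4,5) m unfolding contains_12_21_def by blast
qed
lemma Fc_part: "P \<in> Fc n c \<Longrightarrow> partition_on {1..n} P"
  by (simp add: Fc_def)

lemma sb_refl: "partition_on U P \<Longrightarrow> i \<in> U \<Longrightarrow> same_block P i i"
  by (auto simp: partition_on_def same_block_def)

lemma Fc_nmc:
  assumes t: "(a, k, x) \<in> Iset n"
  shows "Fc n (nmc n (a,k,x)) = {P. partition_on (({1..<a} \<union> {a+k<..n}) \<union> {a..a+k}) P \<and> {a..a+k} \<in> P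
            \<and> (\<forall>B\<in>P - {{a..a+k}}. B \<subseteq> {1..<a} \<or> B \<subseteq> {a+k<..n})}"
proof -
  have par: "1 \<le> a" "a \<le> n" "1 \<le> k" "k \<le> n - a" "1 \<le> x" "x \<le> k" using t by (auto simp: Iset_def)
  define c where "c = nmc n (a,k,x)"
  define b where "b = a + k"
  define X where "X = {a..b}"
  define L where "L = {1..<a}"
  define R where "R = {b<..n}"
  have bn: "a < b" "b \<le> n" "a + x \<le> b" using par unfolding b_def by linarith+
  have U: "(L \<union> R) \<union> X = {1..n}" using par bn unfolding L_def R_def X_def by auto
  have c1: "\<And>i. i \<in> {1..n} \<Longrightarrow> c i = 1 \<longleftrightarrow> (i < a \<or> (a + x \<le> i \<and> i \<le> b))"
    unfolding c_def b_def by (rule nmc_1)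
  have c2: "\<And>i. i \<in> {1..n} \<Longrightarrow> c i = 2 \<longleftrightarrow> (a \<le> i \<and> (i < a + x \<or> b < i))"
    unfolding c_def b_def by (rule nmc_2)
  have an: "a \<in> {1..n}" "b \<in> {1..n}" using par bn by auto
  have ca: "c a = 2" using c2[OF an(1)] par by simp
  have cb: "c b = 1" using c1[OF an(2)] bn by simp
  have "Fc n c = {P. partition_on ((L \<union> R) \<union> X) P \<and> X \<in> P \<and> (\<forall>B\<in>P - {X}. B \<subseteq> L \<or> B \<subseteq> R)}"
  proof (rule set_eqI, rule iffI)
    fix P assume P: "P \<in> Fc n c"
    have p: "partition_on {1..n} P" using P by (rule Fc_part)
    have sbab: "same_block P a b" by (rule Fc_D2[OF P an bn(1) ca cb])
    have sbX: "same_block P a i" if i: "i \<in> X" for i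
    proof -
      have iN: "i \<in> {1..n}" using i par bn unfolding X_def by auto
      show ?thesis
      proof (cases "c i = 1")
        case True
        hence "a + x \<le> i" using c1[OF iN] i unfolding X_def by auto
        hence "a < i" using par by linarith
        thus ?thesis using Fc_D2[OF P an(1) iN _ ca True] by simp
      next
        case False
        hence "\<not> (i < a \<or> (a + x \<le> i \<and> i \<le> b))" using c1[OF iN] by simp
        hence ilt: "i < b" using i bn unfolding X_def by auto
        have "c i = 2" using c2[OF iN] i ilt \<open>\<not> (i < a \<or> (a + x \<le> i \<and> i \<le> b))\<close> unfolding X_def
          by (simp add: not_less)
        hence "same_block P i b" using Fc_D2[OF P iN an(2) ilt] cb by simp
        thus ?thesis using sbab sb_sym sb_trans[OF p] by blast
      qed
    qed
    obtain B0 where B0: "B0 \<in> P" "a \<in> B0" using p an(1) unfolding partition_on_def by blast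
    have inB0: "i \<in> B0" if sai: "same_block P a i" for i
    proof -
      obtain B where B: "B \<in> P" "a \<in> B" "i \<in> B" using sai unfolding same_block_def by blast
      have "B = B0" using B B0 p unfolding partition_on_def disjoint_def by blast
      thus ?thesis using B by simp
    qed
    have XB0: "X \<subseteq> B0" using sbX inB0 by blast
    have B0X: "B0 \<subseteq> X"
    proof
      fix i assume i: "i \<in> B0"
      have iN: "i \<in> {1..n}" using i B0 p unfolding partition_on_def by blast
      have sai: "same_block P a i" using i B0 unfolding same_block_def by blast
      have bX: "b \<in> X" using bn unfolding X_def by simp
      have sbi: "same_block P b i" using sbab sai sb_sym sb_trans[OF p] by blast
      show "i \<in> X"
      proof (rule ccontr)
        assume "i \<notin> X"
        hence "i < a \<or> b < i" unfolding X_def by auto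
        thus False
        proof
          assume ia: "i < a"
          hence "c i = 1" using c1[OF iN] by simp
          hence "\<not> same_block P i a" using Fc_D1[OF P iN an(1) ia _ ca] by simp
          thus False using sai sb_sym by blast
        next
          assume bi: "b < i"
          hence "c i = 2" using c2[OF iN] bn by simp
          hence "\<not> same_block P b i" using Fc_D1[OF P an(2) iN bi cb] by simp
          thus False using sbi by blast
        qed
      qed
    qed
    have XP: "X \<in> P" using XB0 B0X B0 by auto
    have nm: "\<forall>B\<in>P - {X}. B \<subseteq> L \<or> B \<subseteq> R"
    proof
      fix B assume B: "B \<in> P - {X}"
      have BN: "B \<subseteq> {1..n}" using B p unfolding partition_on_def by blast
      have BX: "B \<inter> X = {}" using B XP p unfolding partition_on_def disjoint_def by blast
      show "B \<subseteq> L \<or> B \<subseteq> R"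
      proof (rule ccontr)
        assume "\<not> (B \<subseteq> L \<or> B \<subseteq> R)"
        then obtain i j where ij: "i \<in> B" "i \<notin> R" "j \<in> B" "j \<notin> L" by blast
        have iN: "i \<in> {1..n}" and jN: "j \<in> {1..n}" using ij BN by auto
        have "i \<notin> X" "j \<notin> X" using ij BX by auto
        hence il: "i < a" and jr: "b < j" using ij iN jN unfolding X_def L_def R_def by auto
        have "c i = 1" using c1[OF iN] il by simp
        moreover have "c j = 2" using c2[OF jN] jr bn by simp
        moreover have "i < j" using il jr bn by linarith
        ultimately have "\<not> same_block P i j" using Fc_D1[OF P iN jN] by simp
        moreover have "same_block P i j" using ij B unfolding same_block_def by blast
        ultimately show False by simp
      qed
    qed
    have "partition_on ((L \<union> R) \<union> X) P" using U p by simp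
    thus "P \<in> {P. partition_on ((L \<union> R) \<union> X) P \<and> X \<in> P \<and> (\<forall>B\<in>P - {X}. B \<subseteq> L \<or> B \<subseteq> R)}"
      using XP nm by simp
  next
    fix P assume "P \<in> {P. partition_on ((L \<union> R) \<union> X) P \<and> X \<in> P \<and> (\<forall>B\<in>P - {X}. B \<subseteq> L \<or> B \<subseteq> R)}"
    hence p0: "partition_on ((L \<union> R) \<union> X) P" and XP: "X \<in> P" and nm: "\<forall>B\<in>P - {X}. B \<subseteq> L \<or> B \<subseteq> R"
      by simp_all
    have p: "partition_on {1..n} P" using p0 U by simp
    have g: "\<forall>i\<in>{1..n}. \<forall>j\<in>{1..n}. i < j \<longrightarrow> (c i = 1 \<and> c j = 2 \<longrightarrow> \<not> same_block P i j) \<and> (c i = 2 \<and> c j = 1 \<longrightarrow> same_block P i j)"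
    proof (intro ballI impI)
      fix i j assume iN: "i \<in> {1..n}" and jN: "j \<in> {1..n}" and ij: "i < j"
      show "(c i = 1 \<and> c j = 2 \<longrightarrow> \<not> same_block P i j) \<and> (c i = 2 \<and> c j = 1 \<longrightarrow> same_block P i j)"
      proof (intro conjI impI notI)
        assume cc: "c i = 1 \<and> c j = 2" and sb: "same_block P i j"
        have ci: "i < a \<or> (a + x \<le> i \<and> i \<le> b)" using c1[OF iN] cc by simp
        have cj: "a \<le> j \<and> (j < a + x \<or> b < j)" using c2[OF jN] cc by simp
        obtain B where B: "B \<in> P" "i \<in> B" "j \<in> B" using sb unfolding same_block_def by blast
        show False
        proof (cases "B = X")
          case True
          hence "a \<le> i" "j \<le> b" using B unfolding X_def by auto
          thus False using ci cj ij by linarith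
        next
          case False
          hence "B \<subseteq> L \<or> B \<subseteq> R" using nm B by blast
          hence "(i < a \<and> j < a) \<or> (b < i \<and> b < j)" using B unfolding L_def R_def by auto
          thus False using ci cj ij using bn by auto
        qed
      next
        assume cc: "c i = 2 \<and> c j = 1"
        have ci: "a \<le> i \<and> (i < a + x \<or> b < i)" using c2[OF iN] cc by simp
        have cj: "j < a \<or> (a + x \<le> j \<and> j \<le> b)" using c1[OF jN] cc by simp
        have "a \<le> i" "i \<le> b" "a \<le> j" "j \<le> b" using ci cj ij by linarith+
        hence "i \<in> X" "j \<in> X" unfolding X_def by auto
        thus "same_block P i j" using XP unfolding same_block_def by blast
      qed
    qed
    have "\<not> contains_11_12 (P, c) \<and> \<not> contains_12_21 (P, c)" using g good_iff[OF p] by simp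
    thus "P \<in> Fc n c" using p by (simp add: Fc_def)
  qed
  thus ?thesis unfolding c_def X_def L_def R_def b_def .
qed

lemma card_Fc_nmc:
  assumes t: "(a, k, x) \<in> Iset n"
  shows "card (Fc n (nmc n (a,k,x))) = Bell (a - 1) * Bell (n - (a + k))"
proof -
  have par: "1 \<le> a" "a \<le> n" "1 \<le> k" "k \<le> n - a" using t by (auto simp: Iset_def)
  have dis: "({1..<a} \<union> {a+k<..n}) \<inter> {a..a+k} = {}" by auto
  have ne: "{a..a+k} \<noteq> {}" by simp
  have "card (Fc n (nmc n (a,k,x))) = card {Q. partition_on ({1..<a} \<union> {a+k<..n}) Q \<and> (\<forall>B\<in>Q. B \<subseteq> {1..<a} \<or> B \<subseteq> {a+k<..n})}"
    unfolding Fc_nmc[OF t] by (rule card_add_block[OF ne dis])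
  also have "\<dots> = card (NM {1..<a} {a+k<..n})" by (simp add: NM_def)
  also have "\<dots> = Bell (card {1..<a}) * Bell (card {a+k<..n})" by (rule card_NM) auto
  also have "\<dots> = Bell (a - 1) * Bell (n - (a + k))" by simp
  finally show ?thesis .
qed

lemma shape:
  assumes c: "c \<in> {1..n} \<rightarrow>\<^sub>E {1,2}" and P: "P \<in> Fc n c"
  shows "c \<in> mono_c n ` {0..n} \<union> nmc n ` Iset n"
proof -
  have p: "partition_on {1..n} P" using P by (rule Fc_part)
  have cv: "c i = 1 \<or> c i = 2" if iN: "i \<in> {1..n}" for i
  proof -
    have "c i \<in> {1,2}" by (rule PiE_mem[OF c iN])
    thus ?thesis by simp
  qed
  have cu: "\<And>i. i \<notin> {1..n} \<Longrightarrow> c i = undefined" by (rule PiE_arb[OF c])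
  define T2 where "T2 = {i\<in>{1..n}. c i = 2}"
  have fT2: "finite T2" unfolding T2_def by simp
  show ?thesis
  proof (cases "T2 = {}")
    case True
    have "c = mono_c n n"
    proof
      fix i show "c i = mono_c n n i"
      proof (cases "i \<in> {1..n}")
        case True
        hence "c i = 1" using cv \<open>T2 = {}\<close> unfolding T2_def by blast
        moreover have "mono_c n n i = 1" using mono_1[OF True] True by simp
        ultimately show ?thesis by simp
      next
        case False
        hence "c i = undefined" by (rule cu)
        moreover have "mono_c n n i = undefined" unfolding mono_c_def using False by (rule if_not_P)
        ultimately show ?thesis by simp
      qed
    qed
    thus ?thesis by auto
  next
    case False
    define a where "a = Min T2"
    have aT: "a \<in> T2" unfolding a_def using fT2 False by (rule Min_in)
    have amin: "\<And>i. i \<in> T2 \<Longrightarrow> a \<le> i" unfolding a_def using fT2 by simp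
    have aN: "a \<in> {1..n}" and ca: "c a = 2" using aT unfolding T2_def by auto
    have below: "\<And>i. i \<in> {1..n} \<Longrightarrow> i < a \<Longrightarrow> c i = 1"
    proof -
      fix i assume i: "i \<in> {1..n}" "i < a"
      have "i \<notin> T2" using amin i(2) by (meson not_le)
      thus "c i = 1" using cv[OF i(1)] i(1) unfolding T2_def by blast
    qed
    show ?thesis
    proof (cases "\<exists>i\<in>{1..n}. a < i \<and> c i = 1")
      case False
      have "c = mono_c n (a - 1)"
      proof
        fix i show "c i = mono_c n (a - 1) i"
        proof (cases "i \<in> {1..n}")
          case True
          show ?thesis
          proof (cases "i < a")
            case True
            hence "i \<le> a - 1" by linarith
            hence "mono_c n (a - 1) i = 1" using mono_1[OF \<open>i \<in> {1..n}\<close>] by simp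
            thus ?thesis using below[OF \<open>i \<in> {1..n}\<close> True] by simp
          next
            case False
            hence nle: "\<not> i \<le> a - 1" using aN by auto
            have "c i = 2"
            proof (cases "i = a")
              case True thus ?thesis using ca by simp
            next
              case False
              hence "a < i" using \<open>\<not> i < a\<close> by linarith
              hence "c i \<noteq> 1" using \<open>\<not> (\<exists>i\<in>{1..n}. a < i \<and> c i = 1)\<close> \<open>i \<in> {1..n}\<close> by blast
              thus ?thesis using cv[OF \<open>i \<in> {1..n}\<close>] by blast
            qed
            moreover have "mono_c n (a - 1) i = 2" using mono_2[OF \<open>i \<in> {1..n}\<close>] nle by simp
            ultimately show ?thesis by simp
          qed
        next
          case False
          hence "c i = undefined" by (rule cu)
          moreover have "mono_c n (a - 1) i = undefined" unfolding mono_c_def using False by (rule if_not_P)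
          ultimately show ?thesis by simp
        qed
      qed
      moreover have "a - 1 \<in> {0..n}" using aN by auto
      ultimately show ?thesis by blast
    next
      case True
      define T1 where "T1 = {i\<in>{1..n}. a < i \<and> c i = 1}"
      define S1 where "S1 = {i\<in>{1..n}. c i = 1}"
      have fT1: "finite T1" and fS1: "finite S1" unfolding T1_def S1_def by simp_all
      have neT1: "T1 \<noteq> {}" using True unfolding T1_def by blast
      define d where "d = Min T1"
      have dT: "d \<in> T1" unfolding d_def using fT1 neT1 by (rule Min_in)
      have dmin: "\<And>i. i \<in> T1 \<Longrightarrow> d \<le> i" unfolding d_def using fT1 by simp
      have dN: "d \<in> {1..n}" and ad: "a < d" and cd: "c d = 1" using dT unfolding T1_def by auto
      have neS1: "S1 \<noteq> {}" using dN cd unfolding S1_def by blast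
      define b where "b = Max S1"
      have bS: "b \<in> S1" unfolding b_def using fS1 neS1 by (rule Max_in)
      have bmax: "\<And>i. i \<in> S1 \<Longrightarrow> i \<le> b" unfolding b_def using fS1 by simp
      have bN: "b \<in> {1..n}" and cb: "c b = 1" using bS unfolding S1_def by auto
      have db: "d \<le> b" using bmax dN cd unfolding S1_def by blast
      define k where "k = b - a"
      define x where "x = d - a"
      have kx: "a + k = b" "a + x = d" using ad db unfolding k_def x_def by linarith+
      have "1 \<le> a" "a \<le> n" "1 \<le> k" "k \<le> n - a" "1 \<le> x" "x \<le> k"
        using aN bN ad db kx by auto
      hence tI: "(a, k, x) \<in> Iset n" unfolding Iset_def by simp
      have "a < b" using ad db by linarith
      hence sbab: "same_block P a b" using Fc_D2[OF P aN bN _ ca cb] by simp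
      have sbad: "same_block P a d" using Fc_D2[OF P aN dN ad ca cd] .
      have "c = nmc n (a, k, x)"
      proof
        fix i show "c i = nmc n (a, k, x) i"
        proof (cases "i \<in> {1..n}")
          case False
          hence "c i = undefined" by (rule cu)
          moreover have "nmc n (a, k, x) i = undefined" unfolding nmc_def prod.case using False by (rule if_not_P)
          ultimately show ?thesis by simp
        next
          case iN: True
          have n1: "nmc n (a,k,x) i = 1 \<longleftrightarrow> (i < a \<or> (d \<le> i \<and> i \<le> b))" using nmc_1[OF iN] kx by simp
          have n2: "nmc n (a,k,x) i = 2 \<longleftrightarrow> (a \<le> i \<and> (i < d \<or> b < i))" using nmc_2[OF iN] kx by simp
          show ?thesis
          proof (cases "i < a")
            case True
            thus ?thesis using below[OF iN True] n1 by simp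
          next
            case nia: False
            show ?thesis
            proof (cases "i < d")
              case True
              have "c i = 2"
              proof (cases "i = a")
                case True thus ?thesis using ca by simp
              next
                case False
                hence "a < i" using nia by linarith
                hence "i \<notin> T1" using dmin True by (meson not_le)
                hence "c i \<noteq> 1" using iN \<open>a < i\<close> unfolding T1_def by blast
                thus ?thesis using cv[OF iN] by blast
              qed
              moreover have "nmc n (a,k,x) i = 2" using n2 nia True by simp
              ultimately show ?thesis by simp
            next
              case nid: False
              show ?thesis
              proof (cases "i \<le> b")
                case True
                have "c i = 1"
                proof (rule ccontr)
                  assume "c i \<noteq> 1"
                  hence ci2: "c i = 2" using cv[OF iN] by blast
                  have "i \<noteq> d" using cd ci2 by auto
                  hence di: "d < i" using nid by linarith
                  have "i \<noteq> b" using cb ci2 by auto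
                  hence ib: "i < b" using True by linarith
                  have "same_block P i b" using Fc_D2[OF P iN bN ib ci2 cb] .
                  hence "same_block P d i" using sbab sbad sb_sym sb_trans[OF p] by blast
                  moreover have "\<not> same_block P d i" using Fc_D1[OF P dN iN di cd ci2] .
                  ultimately show False by simp
                qed
                moreover have "nmc n (a,k,x) i = 1" using n1 nid True by simp
                ultimately show ?thesis by simp
              next
                case False
                hence "i \<notin> S1" using bmax by (meson not_le)
                hence "c i \<noteq> 1" using iN unfolding S1_def by blast
                hence "c i = 2" using cv[OF iN] by blast
                moreover have "nmc n (a,k,x) i = 2" using n2 nia False by simp
                ultimately show ?thesis by simp
              qed
            qed
          qed
        qed
      qed
      thus ?thesis using tI by blast
    qed
  qed
qed

lemma mono_in_CE: "mono_c n p \<in> {1..n} \<rightarrow>\<^sub>E {1,2}"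
  unfolding PiE_iff extensional_def mono_c_def by auto

lemma nmc_in_CE: "nmc n t \<in> {1..n} \<rightarrow>\<^sub>E {1,2}"
  unfolding PiE_iff extensional_def nmc_def by (auto split: prod.splits)

lemma nmc_E:
  assumes "nmc n (a,k,x) = nmc n (a',k',x')" "i \<in> {1..n}"
  shows "(i < a \<or> (a + x \<le> i \<and> i \<le> a + k)) \<longleftrightarrow> (i < a' \<or> (a' + x' \<le> i \<and> i \<le> a' + k'))"
proof -
  have "nmc n (a,k,x) i = 1 \<longleftrightarrow> nmc n (a',k',x') i = 1" using assms(1) by simp
  thus ?thesis unfolding nmc_1[OF assms(2)] .
qed

lemma nmc_inj: "inj_on (nmc n) (Iset n)"
proof (rule inj_onI)
  fix t t' assume t: "t \<in> Iset n" and t': "t' \<in> Iset n" and eq: "nmc n t = nmc n t'"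
  obtain a k x where tt: "t = (a,k,x)" by (cases t) auto
  obtain a' k' x' where tt': "t' = (a',k',x')" by (cases t') auto
  have par: "1 \<le> a" "a \<le> n" "1 \<le> k" "k \<le> n - a" "1 \<le> x" "x \<le> k" using t tt by (auto simp: Iset_def)
  have par': "1 \<le> a'" "a' \<le> n" "1 \<le> k'" "k' \<le> n - a'" "1 \<le> x'" "x' \<le> k'" using t' tt' by (auto simp: Iset_def)
  have eq': "nmc n (a,k,x) = nmc n (a',k',x')" using eq tt tt' by simp
  note E = nmc_E[OF eq']
  have aa: "a = a'"
  proof (rule ccontr)
    assume "a \<noteq> a'"
    hence "a < a' \<or> a' < a" by linarith
    thus False
    proof
      assume h: "a < a'"
      have m: "a \<in> {1..n}" using par by simp
      have L: "\<not> (a < a \<or> (a + x \<le> a \<and> a \<le> a + k))" using par by auto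
      have R: "a < a' \<or> (a' + x' \<le> a \<and> a \<le> a' + k')" using h by simp
      show False using E[OF m] L R by blast
    next
      assume h: "a' < a"
      have m: "a' \<in> {1..n}" using par' by simp
      have L: "\<not> (a' < a' \<or> (a' + x' \<le> a' \<and> a' \<le> a' + k'))" using par' by auto
      have R: "a' < a \<or> (a + x \<le> a' \<and> a' \<le> a + k)" using h by simp
      show False using E[OF m] L R by blast
    qed
  qed
  have kk: "k = k'"
  proof (rule ccontr)
    assume "k \<noteq> k'"
    hence "k < k' \<or> k' < k" by linarith
    thus False
    proof
      assume h: "k < k'"
      have m: "a + k' \<in> {1..n}" using par' aa by auto
      have L: "\<not> (a + k' < a \<or> (a + x \<le> a + k' \<and> a + k' \<le> a + k))" using h by auto
      have R: "a + k' < a' \<or> (a' + x' \<le> a + k' \<and> a + k' \<le> a' + k')" using par' aa by auto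
      show False using E[OF m] L R by blast
    next
      assume h: "k' < k"
      have m: "a + k \<in> {1..n}" using par by auto
      have L: "\<not> (a + k < a' \<or> (a' + x' \<le> a + k \<and> a + k \<le> a' + k'))" using h aa by auto
      have R: "a + k < a \<or> (a + x \<le> a + k \<and> a + k \<le> a + k)" using par by auto
      show False using E[OF m] L R by blast
    qed
  qed
  have xx: "x = x'"
  proof (rule ccontr)
    assume "x \<noteq> x'"
    hence "x < x' \<or> x' < x" by linarith
    thus False
    proof
      assume h: "x < x'"
      have m: "a + x \<in> {1..n}" using par by auto
      have R: "\<not> (a + x < a' \<or> (a' + x' \<le> a + x \<and> a + x \<le> a' + k'))" using h aa by auto
      have L: "a + x < a \<or> (a + x \<le> a + x \<and> a + x \<le> a + k)" using par by auto
      show False using E[OF m] L R by blast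
    next
      assume h: "x' < x"
      have m: "a + x' \<in> {1..n}" using par' aa kk by auto
      have L: "\<not> (a + x' < a \<or> (a + x \<le> a + x' \<and> a + x' \<le> a + k))" using h by auto
      have R: "a + x' < a' \<or> (a' + x' \<le> a + x' \<and> a + x' \<le> a' + k')" using par' aa kk by auto
      show False using E[OF m] L R by blast
    qed
  qed
  show "t = t'" using tt tt' aa kk xx by simp
qed

lemma mono_inj: "inj_on (mono_c n) {0..n}"
proof (rule inj_onI)
  fix p q assume p: "p \<in> {0..n}" and q: "q \<in> {0..n}" and eq: "mono_c n p = mono_c n q"
  have E: "\<And>i. i \<in> {1..n} \<Longrightarrow> i \<le> p \<longleftrightarrow> i \<le> q"
  proof -
    fix i assume iN: "i \<in> {1..n}"
    have "mono_c n p i = 1 \<longleftrightarrow> mono_c n q i = 1" using eq by simp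
    thus "i \<le> p \<longleftrightarrow> i \<le> q" unfolding mono_1[OF iN] .
  qed
  show "p = q"
  proof (rule ccontr)
    assume "p \<noteq> q"
    hence "p < q \<or> q < p" by linarith
    thus False
    proof
      assume h: "p < q"
      have "q \<in> {1..n}" using h q by auto
      from E[OF this] show False using h by linarith
    next
      assume h: "q < p"
      have "p \<in> {1..n}" using h p by auto
      from E[OF this] show False using h by linarith
    qed
  qed
qed

lemma mono_nmc_disj: "mono_c n ` {0..n} \<inter> nmc n ` Iset n = {}"
proof (rule ccontr)
  assume "mono_c n ` {0..n} \<inter> nmc n ` Iset n \<noteq> {}"
  then obtain p a k x where p: "p \<in> {0..n}" and t: "(a,k,x) \<in> Iset n" and eq: "mono_c n p = nmc n (a,k,x)"
    by auto
  have par: "1 \<le> a" "a \<le> n" "1 \<le> k" "k \<le> n - a" "1 \<le> x" "x \<le> k" using t by (auto simp: Iset_def)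
  have E: "\<And>i. i \<in> {1..n} \<Longrightarrow> i \<le> p \<longleftrightarrow> (i < a \<or> (a + x \<le> i \<and> i \<le> a + k))"
  proof -
    fix i assume iN: "i \<in> {1..n}"
    have "mono_c n p i = 1 \<longleftrightarrow> nmc n (a,k,x) i = 1" using eq by simp
    thus "i \<le> p \<longleftrightarrow> (i < a \<or> (a + x \<le> i \<and> i \<le> a + k))" unfolding mono_1[OF iN] nmc_1[OF iN] .
  qed
  have a1: "a \<in> {1..n}" using par by auto
  have a2: "a + k \<in> {1..n}" using par by auto
  have "\<not> (a < a \<or> (a + x \<le> a \<and> a \<le> a + k))" using par by auto
  hence "\<not> a \<le> p" using E[OF a1] by blast
  moreover have "a + k < a \<or> (a + x \<le> a + k \<and> a + k \<le> a + k)" using par by auto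
  hence "a + k \<le> p" using E[OF a2] by blast
  ultimately show False by linarith
qed

lemma Bell0: "Bell 0 = 1"
  by (simp add: Bell_def partition_on_empty)

lemma Bell1: "Bell 1 = 1"
  using Bell_Suc[of 0] Bell0 by simp

theorem mainTheorem7:
  fixes n :: nat
  assumes "n \<ge> 2"
  shows "card (avoiders n) =
    2 * Bell n + (\<Sum>j=2..n. \<Sum>k=0..n-j. Bell (n - j - k)) + Bell (n - 1)
    + (\<Sum>j=2..n-1. Bell (j - 1) * (Bell (n - j)
        + (\<Sum>k=1..n-j. (k + (n - j choose k)) * Bell (n - j - k))))"
proof -
  define CE where "CE = {1..n} \<rightarrow>\<^sub>E {1::nat,2}"
  define G where "G = mono_c n ` {0..n} \<union> nmc n ` Iset n"
  have finCE: "finite CE" unfolding CE_def by (simp add: finite_PiE)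
  have GCE: "G \<subseteq> CE" unfolding G_def CE_def using mono_in_CE nmc_in_CE by blast
  have finI: "finite (Iset n)" unfolding Iset_def by simp
  have "card (avoiders n) = (\<Sum>c\<in>CE. card (Fc n c))" unfolding CE_def by (rule card_avoiders)
  also have "\<dots> = (\<Sum>c\<in>G. card (Fc n c))"
  proof (rule sum.mono_neutral_right[OF finCE GCE], rule ballI)
    fix c assume c: "c \<in> CE - G"
    have "Fc n c = {}"
    proof (rule ccontr)
      assume "Fc n c \<noteq> {}"
      then obtain P where "P \<in> Fc n c" by blast
      hence "c \<in> G" using shape c unfolding CE_def G_def by blast
      thus False using c by blast
    qed
    thus "card (Fc n c) = 0" by simp
  qed
  also have "\<dots> = (\<Sum>c\<in>mono_c n ` {0..n}. card (Fc n c)) + (\<Sum>c\<in>nmc n ` Iset n. card (Fc n c))"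
    unfolding G_def by (rule sum.union_disjoint) (use finI mono_nmc_disj in auto)
  also have "(\<Sum>c\<in>mono_c n ` {0..n}. card (Fc n c)) = (\<Sum>p=0..n. card (Fc n (mono_c n p)))"
    by (rule sum.reindex[OF mono_inj, unfolded comp_def])
  also have "\<dots> = (\<Sum>p=0..n. Bell p * Bell (n - p))"
    by (rule sum.cong[OF refl]) (simp add: card_Fc_mono)
  also have "(\<Sum>c\<in>nmc n ` Iset n. card (Fc n c)) = (\<Sum>t\<in>Iset n. card (Fc n (nmc n t)))"
    by (rule sum.reindex[OF nmc_inj, unfolded comp_def])
  also have "\<dots> = (\<Sum>(a,k,x)\<in>Iset n. Bell (a - 1) * Bell (n - (a + k)))"
  proof (rule sum.cong[OF refl])
    fix t assume t: "t \<in> Iset n"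
    obtain a k x where tt: "t = (a,k,x)" by (cases t) auto
    show "card (Fc n (nmc n t)) = (case t of (a,k,x) \<Rightarrow> Bell (a - 1) * Bell (n - (a + k)))"
      using card_Fc_nmc[of a k x n] t tt by simp
  qed
  also have "\<dots> = (\<Sum>a=1..n. \<Sum>(k,x)\<in>(SIGMA k:{1..n-a}. {1..k}). Bell (a - 1) * Bell (n - (a + k)))"
    unfolding Iset_def by (rule sum.Sigma[symmetric]) auto
  also have "\<dots> = (\<Sum>a=1..n. \<Sum>k=1..n-a. \<Sum>x=1..k. Bell (a - 1) * Bell (n - (a + k)))"
    by (rule sum.cong[OF refl], rule sum.Sigma[symmetric]) auto
  also have "\<dots> = (\<Sum>a=1..n. \<Sum>k=1..n-a. k * (Bell (a - 1) * Bell (n - (a + k))))"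
    by simp
  finally have "card (avoiders n) = (\<Sum>p=0..n. Bell p * Bell (n - p)) + (\<Sum>a=1..n. \<Sum>k=1..n-a. k * (Bell (a - 1) * Bell (n - (a + k))))" .
  also have "\<dots> = 2 * Bell n + (\<Sum>j=2..n. \<Sum>k=0..n-j. Bell (n - j - k)) + Bell (n - 1)
    + (\<Sum>j=2..n-1. Bell (j - 1) * (Bell (n - j)
        + (\<Sum>k=1..n-j. (k + (n - j choose k)) * Bell (n - j - k))))"
    by (rule arith_main[OF assms Bell_Suc Bell0 Bell1])
  finally show ?thesis .
qed

end
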